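(* Let $L_1,L_2,L_3$ be self-adjoint complex $2\times2$ matrices and consider the stochastic differential equation for a complex process $w$, with $W=(1,w)$, \[ dw=\frac12\sum_{j=1}^3[w(L_j^*L_jW)_0-(L_j^*L_jW)_1]\,dt+\sum_{j=1}^3[w(L_jW)_0^2-(L_jW)_0(L_jW)_1]\,dt+\sum_{j=1}^3[(L_jW)_1-w(L_jW)_0]\,dY^j_t, \] where $Y$ is a standard three-dimensional Wiener process. Its diffusion operator (generator), written in coordinates $w=x+iy$, coincides up to a constant multiplier with the Laplace–Beltrami operator of the unit sphere in stereographic coordinates, $\frac14(1+x^2+y^2)^2\big(\frac{\partial^2}{\partial x^2}+\frac{\partial^2}{\partial y^2}\big)$, if and only if $L_1,L_2,L_3$ form a basis of the real space of traceless self-adjoint $2\times2$ matrices which is orthogonal in the sense that \[ \mathrm{tr}(L_jL_k)=2\big(l^{00}_jl^{00}_k+\mathrm{Re}\,l^{01}_j\,\mathrm{Re}\,l^{01}_k+\mathrm{Im}\,l^{01}_j\,\mathrm{Im}\,l^{01}_k\big)=a\,\delta_{jk} \] for some constant $a$, where $L_j=\begin{pmatrix} l^{00}_j & l^{01}_j\\ \overline{l^{01}_j} & l^{11}_j\end{pmatrix}$. For the Pauli matrices $a=2$, and the diffusion operator equals exactly the Laplace–Beltrami operator when $a=1$.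
   Context: For $v\in\mathbb{C}^2$, $(v)_0,(v)_1$ denote its coordinates. This SDE is the quantum filtering equation for a qubit with vanishing Hamiltonian and coupling operators $L_j$, in the projective coordinate $w=\chi_1/\chi_0$. The Pauli matrices are $\sigma_1=\begin{pmatrix}0&1\\1&0\end{pmatrix}$, $\sigma_2=\begin{pmatrix}0&-i\\ i&0\end{pmatrix}$, $\sigma_3=\begin{pmatrix}1&0\\0&-1\end{pmatrix}$. *)

theory Defs
  imports "HOL-Analysis.Analysis"
begin

type_synonym cmat = "complex^2^2"

text \<open>Conjugate transpose, self-adjointness; matrix indices are 0 and 1 of type 2.\<close>
definition cadj :: "cmat \<Rightarrow> cmat" where
  "cadj A = (\<chi> i j. cnj (A $ j $ i))"

definition selfadj :: "cmat \<Rightarrow> bool" where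
  "selfadj A \<longleftrightarrow> cadj A = A"

definition traceless_sa :: "cmat set" where
  "traceless_sa = {A. selfadj A \<and> trace A = 0}"

definition is_real_basis3 :: "(nat \<Rightarrow> cmat) \<Rightarrow> bool" where
  "is_real_basis3 L \<longleftrightarrow>
     (\<forall>j\<in>{1..3}. L j \<in> traceless_sa) \<and>
     (\<forall>r :: nat \<Rightarrow> real. (\<Sum>j\<in>{1..3}. r j *\<^sub>R L j) = 0 \<longrightarrow> (\<forall>j\<in>{1..3}. r j = 0)) \<and>
     (\<forall>A\<in>traceless_sa. \<exists>r :: nat \<Rightarrow> real. A = (\<Sum>j\<in>{1..3}. r j *\<^sub>R L j))"

definition trace_orth :: "(nat \<Rightarrow> cmat) \<Rightarrow> real \<Rightarrow> bool" where
  "trace_orth L a \<longleftrightarrow>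
     (\<forall>j\<in>{1..3}. \<forall>k\<in>{1..3}. trace (L j ** L k) = of_real a * (if j = k then 1 else 0))"

definition Wv :: "complex \<Rightarrow> complex^2" where
  "Wv w = (\<chi> i. if i = 0 then 1 else w)"

definition drift :: "(nat \<Rightarrow> cmat) \<Rightarrow> complex \<Rightarrow> complex" where
  "drift L w =
     (1/2) * (\<Sum>j\<in>{1..3}. w * ((cadj (L j) ** L j) *v Wv w) $ 0 - ((cadj (L j) ** L j) *v Wv w) $ 1)
     + (\<Sum>j\<in>{1..3}. w * ((L j *v Wv w) $ 0)^2 - (L j *v Wv w) $ 0 * (L j *v Wv w) $ 1)"

definition diffc :: "(nat \<Rightarrow> cmat) \<Rightarrow> nat \<Rightarrow> complex \<Rightarrow> complex" where
  "diffc L j w = (L j *v Wv w) $ 1 - w * (L j *v Wv w) $ 0"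

definition px :: "(complex \<Rightarrow> real) \<Rightarrow> complex \<Rightarrow> real" where
  "px f z = deriv (\<lambda>t. f (z + of_real t)) 0"

definition py :: "(complex \<Rightarrow> real) \<Rightarrow> complex \<Rightarrow> real" where
  "py f z = deriv (\<lambda>t. f (z + \<i> * of_real t)) 0"

definition pxx :: "(complex \<Rightarrow> real) \<Rightarrow> complex \<Rightarrow> real" where
  "pxx f z = px (px f) z"

definition pyy :: "(complex \<Rightarrow> real) \<Rightarrow> complex \<Rightarrow> real" where
  "pyy f z = py (py f) z"

definition pxy :: "(complex \<Rightarrow> real) \<Rightarrow> complex \<Rightarrow> real" where
  "pxy f z = px (py f) z"

text \<open>Diffusion operator (Ito generator) of dw = b dt + sum_j sigma_j dY^j, Y standard
  3-dimensional Wiener process, written in real coordinates w = x + i y.\<close>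
definition gen :: "(nat \<Rightarrow> cmat) \<Rightarrow> (complex \<Rightarrow> real) \<Rightarrow> complex \<Rightarrow> real" where
  "gen L f z =
     Re (drift L z) * px f z + Im (drift L z) * py f z
     + (1/2) * (\<Sum>j\<in>{1..3}.
          (Re (diffc L j z))^2 * pxx f z
          + 2 * Re (diffc L j z) * Im (diffc L j z) * pxy f z
          + (Im (diffc L j z))^2 * pyy f z)"

definition LB :: "(complex \<Rightarrow> real) \<Rightarrow> complex \<Rightarrow> real" where
  "LB f z = (1/4) * (1 + (Re z)^2 + (Im z)^2)^2 * (pxx f z + pyy f z)"

definition pauli :: "nat \<Rightarrow> cmat" where
  "pauli j = (if j = 1 then (\<chi> i k. if i = k then 0 else 1)
              else if j = 2 then (\<chi> i k. if i = k then 0 else if i = 0 then - \<i> else \<i>)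
              else (\<chi> i k. if i = k then (if i = 0 then 1 else -1) else 0))"

end

theory Submission imports Defs begin
lemma UNIV2: "(UNIV::2 set) = {0, 1}"
proof -
  have z: "(2::2) = 0" by simp
  have "(UNIV::2 set) = {1, 0}" using UNIV_2 unfolding z .
  then show ?thesis by blast
qed
lemma sum2: "sum f (UNIV::2 set) = f 0 + f 1"
  unfolding UNIV2 by simp
lemma ex2: "(i::2) = 0 \<or> i = 1" using UNIV2 by auto

definition mk :: "real \<Rightarrow> real \<Rightarrow> real \<Rightarrow> real \<Rightarrow> cmat" where
 "mk t a u v = (\<chi> i k. if i = 0 then (if k = 0 then complex_of_real (t+a) else Complex u v)
                       else (if k = 0 then Complex u (-v) else complex_of_real (t-a)))"

lemma mk_simps[simp]: "mk t a u v $ 0 $ 0 = complex_of_real (t+a)"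
  "mk t a u v $ 0 $ 1 = Complex u v" "mk t a u v $ 1 $ 0 = Complex u (-v)"
  "mk t a u v $ 1 $ 1 = complex_of_real (t-a)"
  by (simp_all add: mk_def)

lemma all2: "(\<forall>i::2. P i) \<longleftrightarrow> P 0 \<and> P 1"
proof -
  have "(\<forall>i::2. P i) = (\<forall>i\<in>(UNIV::2 set). P i)" by simp
  also have "\<dots> = (\<forall>i\<in>{0,1}. P i)" unfolding UNIV2 ..
  finally show ?thesis by simp
qed

lemma selfadj_mk: assumes "selfadj A"
  shows "A = mk (Re(A$0$0 + A$1$1)/2) (Re(A$0$0 - A$1$1)/2) (Re (A$0$1)) (Im (A$0$1))"
proof -
  have e: "A $ i $ k = cnj (A $ k $ i)" for i k
  proof -
    have "A $ i $ k = cadj A $ i $ k" using assms by (simp add: selfadj_def)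
    also have "\<dots> = cnj (A $ k $ i)" by (simp add: cadj_def)
    finally show ?thesis .
  qed
  have "Im (A$0$0) = - Im (A$0$0)" using arg_cong[OF e[of 0 0], of Im] by simp
  then have 1: "Im (A$0$0) = 0" by simp
  have "Im (A$1$1) = - Im (A$1$1)" using arg_cong[OF e[of 1 1], of Im] by simp
  then have 2: "Im (A$1$1) = 0" by simp
  have 3: "A$1$0 = cnj (A$0$1)" using e[of 1 0] by simp
  show ?thesis unfolding vec_eq_iff all2 mk_simps
    using 1 2 3 by (simp add: complex_eq_iff field_simps)
qed

lemma cadj_mk[simp]: "cadj (mk t a u v) = mk t a u v"
  unfolding cadj_def vec_eq_iff using ex2 by (auto simp: mk_def complex_eq_iff)

lemma selfadj_mk'[simp]: "selfadj (mk t a u v)" by (simp add: selfadj_def)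

lemma Wv_simps[simp]: "Wv w $ 0 = 1" "Wv w $ 1 = w" by (simp_all add: Wv_def)

lemma mv_mk[simp]: "(mk t a u v *v x) $ 0 = of_real (t+a) * x$0 + Complex u v * x$1"
   "(mk t a u v *v x) $ 1 = Complex u (-v) * x$0 + of_real (t-a) * x$1"
  by (simp_all add: matrix_vector_mult_def sum2)

lemma mm_mk[simp]: "(mk t a u v ** B) $ 0 $ k = of_real (t+a) * B$0$k + Complex u v * B$1$k"
   "(mk t a u v ** B) $ 1 $ k = Complex u (-v) * B$0$k + of_real (t-a) * B$1$k"
  by (simp_all add: matrix_matrix_mult_def sum2)

lemma mv2: "((B::cmat) *v x) $ i = B$i$0 * x$0 + B$i$1 * x$1"
  by (simp add: matrix_vector_mult_def sum2)

definition D :: "real \<Rightarrow> real \<Rightarrow> real \<Rightarrow> complex \<Rightarrow> complex" where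
  "D a u v w = Complex u (-v) - 2 * of_real a * w - Complex u v * w^2"

lemma diffc_mk: "L j = mk t a u v \<Longrightarrow> diffc L j w = D a u v w"
  unfolding diffc_def D_def by (simp add: algebra_simps power2_eq_square)

lemma T1_mk: "w * ((cadj (mk t a u v) ** mk t a u v) *v Wv w) $ 0 - ((cadj (mk t a u v) ** mk t a u v) *v Wv w) $ 1
   = - 2 * of_real t * D a u v w"
  unfolding D_def by (simp add: mv2 algebra_simps power2_eq_square)

lemma T2_mk: "w * ((mk t a u v *v Wv w) $ 0)^2 - (mk t a u v *v Wv w) $ 0 * (mk t a u v *v Wv w) $ 1
   = - (of_real t + of_real a + Complex u v * w) * D a u v w"
  unfolding D_def by (simp add: algebra_simps power2_eq_square)

lemma trace_mk: "trace (mk t a u v ** mk t2 a2 u2 v2) = of_real (2*t*t2 + 2*a*a2 + 2*u*u2 + 2 * v * v2)"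
  unfolding trace_def by (simp add: sum2 complex_eq_iff algebra_simps)

lemma trace_mk1: "trace (mk t a u v) = of_real (2*t)"
  unfolding trace_def by (simp add: sum2)

lemma sum3: "sum f {1..3::nat} = f 1 + f 2 + f 3"
proof -
  have "{1..3::nat} = {1,2,3}" by auto
  then show ?thesis by (simp add: add.assoc)
qed

definition Gc :: "(nat \<Rightarrow> real) \<Rightarrow> (nat \<Rightarrow> real) \<Rightarrow> (nat \<Rightarrow> real) \<Rightarrow> real \<Rightarrow> bool" where
  "Gc A U V s \<longleftrightarrow> A 1*A 1 + A 2*A 2 + A 3*A 3 = s \<and> U 1*U 1 + U 2*U 2 + U 3*U 3 = s
     \<and> V 1*V 1 + V 2*V 2 + V 3*V 3 = s \<and> A 1*U 1 + A 2*U 2 + A 3*U 3 = 0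
     \<and> A 1*V 1 + A 2*V 2 + A 3*V 3 = 0 \<and> U 1*V 1 + U 2*V 2 + U 3*V 3 = 0"

definition Hc :: "(nat \<Rightarrow> real) \<Rightarrow> (nat \<Rightarrow> real) \<Rightarrow> (nat \<Rightarrow> real) \<Rightarrow> real \<Rightarrow> bool" where
  "Hc A U V s \<longleftrightarrow> (\<forall>j\<in>{1..3}. \<forall>k\<in>{1..3}. A j*A k + U j*U k + V j*V k = (if j = k then s else 0))"

lemma set3: "{1..3::nat} = {1,2,3}" by auto

lemma Hc_iff: "Hc A U V s \<longleftrightarrow>
     A 1*A 1 + U 1*U 1 + V 1*V 1 = s \<and> A 2*A 2 + U 2*U 2 + V 2*V 2 = s
   \<and> A 3*A 3 + U 3*U 3 + V 3*V 3 = s \<and> A 1*A 2 + U 1*U 2 + V 1*V 2 = 0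
   \<and> A 1*A 3 + U 1*U 3 + V 1*V 3 = 0 \<and> A 2*A 3 + U 2*U 3 + V 2*V 3 = 0"
  unfolding Hc_def set3 by (auto simp: mult.commute)

lemma frob:
  fixes a1 a2 a3 u1 u2 u3 c1 c2 c3 s :: real
  shows "(a1*a1+u1*u1+c1*c1 - s)^2 + (a2*a2+u2*u2+c2*c2 - s)^2 + (a3*a3+u3*u3+c3*c3 - s)^2
     + 2*(a1*a2+u1*u2+c1*c2)^2 + 2*(a1*a3+u1*u3+c1*c3)^2 + 2*(a2*a3+u2*u3+c2*c3)^2
   = (a1*a1+a2*a2+a3*a3 - s)^2 + (u1*u1+u2*u2+u3*u3 - s)^2 + (c1*c1+c2*c2+c3*c3 - s)^2
     + 2*(a1*u1+a2*u2+a3*u3)^2 + 2*(a1*c1+a2*c2+a3*c3)^2 + 2*(u1*c1+u2*c2+u3*c3)^2"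
  by (simp add: power2_eq_square algebra_simps)

lemma six_zero:
  fixes x1 x2 x3 x4 x5 x6 :: real
  assumes "x1^2 + x2^2 + x3^2 + 2*x4^2 + 2*x5^2 + 2*x6^2 = 0"
  shows "x1 = 0 \<and> x2 = 0 \<and> x3 = 0 \<and> x4 = 0 \<and> x5 = 0 \<and> x6 = 0"
proof -
  have "x1^2 = 0 \<and> x2^2 = 0 \<and> x3^2 = 0 \<and> x4^2 = 0 \<and> x5^2 = 0 \<and> x6^2 = 0"
    using assms zero_le_power2[of x1] zero_le_power2[of x2] zero_le_power2[of x3]
      zero_le_power2[of x4] zero_le_power2[of x5] zero_le_power2[of x6] by linarith
  then show ?thesis by simp
qed

lemma Gc_Hc: "Gc A U V s \<Longrightarrow> Hc A U V s"
proof -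
  assume G: "Gc A U V s"
  have "(A 1*A 1+U 1*U 1+V 1*V 1 - s)^2 + (A 2*A 2+U 2*U 2+V 2*V 2 - s)^2 + (A 3*A 3+U 3*U 3+V 3*V 3 - s)^2
     + 2*(A 1*A 2+U 1*U 2+V 1*V 2)^2 + 2*(A 1*A 3+U 1*U 3+V 1*V 3)^2 + 2*(A 2*A 3+U 2*U 3+V 2*V 3)^2
    = (A 1*A 1+A 2*A 2+A 3*A 3 - s)^2 + (U 1*U 1+U 2*U 2+U 3*U 3 - s)^2 + (V 1*V 1+V 2*V 2+V 3*V 3 - s)^2
     + 2*(A 1*U 1+A 2*U 2+A 3*U 3)^2 + 2*(A 1*V 1+A 2*V 2+A 3*V 3)^2 + 2*(U 1*V 1+U 2*V 2+U 3*V 3)^2"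
    by (rule frob)
  also have "\<dots> = 0" using G unfolding Gc_def by simp
  finally have "(A 1*A 1+U 1*U 1+V 1*V 1 - s)^2 + (A 2*A 2+U 2*U 2+V 2*V 2 - s)^2 + (A 3*A 3+U 3*U 3+V 3*V 3 - s)^2
     + 2*(A 1*A 2+U 1*U 2+V 1*V 2)^2 + 2*(A 1*A 3+U 1*U 3+V 1*V 3)^2 + 2*(A 2*A 3+U 2*U 3+V 2*V 3)^2 = 0" .
  from six_zero[OF this] show ?thesis unfolding Hc_iff by simp
qed

lemma Hc_Gc: "Hc A U V s \<Longrightarrow> Gc A U V s"
proof -
  assume H: "Hc A U V s"
  have "(A 1*A 1+A 2*A 2+A 3*A 3 - s)^2 + (U 1*U 1+U 2*U 2+U 3*U 3 - s)^2 + (V 1*V 1+V 2*V 2+V 3*V 3 - s)^2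
     + 2*(A 1*U 1+A 2*U 2+A 3*U 3)^2 + 2*(A 1*V 1+A 2*V 2+A 3*V 3)^2 + 2*(U 1*V 1+U 2*V 2+U 3*V 3)^2
    = (A 1*A 1+U 1*U 1+V 1*V 1 - s)^2 + (A 2*A 2+U 2*U 2+V 2*V 2 - s)^2 + (A 3*A 3+U 3*U 3+V 3*V 3 - s)^2
     + 2*(A 1*A 2+U 1*U 2+V 1*V 2)^2 + 2*(A 1*A 3+U 1*U 3+V 1*V 3)^2 + 2*(A 2*A 3+U 2*U 3+V 2*V 3)^2"
    by (rule frob[symmetric])
  also have "\<dots> = 0" using H unfolding Hc_iff by simp
  finally have "(A 1*A 1+A 2*A 2+A 3*A 3 - s)^2 + (U 1*U 1+U 2*U 2+U 3*U 3 - s)^2 + (V 1*V 1+V 2*V 2+V 3*V 3 - s)^2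
     + 2*(A 1*U 1+A 2*U 2+A 3*U 3)^2 + 2*(A 1*V 1+A 2*V 2+A 3*V 3)^2 + 2*(U 1*V 1+U 2*V 2+U 3*V 3)^2 = 0" .
  from six_zero[OF this] show ?thesis unfolding Gc_def by simp
qed

lemma indep_core:
  assumes H: "Hc A U V s" and s: "s \<noteq> 0"
    and 1: "r 1 * A 1 + r 2 * A 2 + r 3 * A 3 = 0"
    and 2: "r 1 * U 1 + r 2 * U 2 + r 3 * U 3 = 0"
    and 3: "r 1 * V 1 + r 2 * V 2 + r 3 * V 3 = 0"
  shows "r 1 = 0 \<and> r 2 = 0 \<and> r 3 = 0"
proof -
  have e: "r 1 * (A k*A 1 + U k*U 1 + V k*V 1) + r 2 * (A k*A 2 + U k*U 2 + V k*V 2) + r 3 * (A k*A 3 + U k*U 3 + V k*V 3)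
      = A k * (r 1 * A 1 + r 2 * A 2 + r 3 * A 3) + U k * (r 1 * U 1 + r 2 * U 2 + r 3 * U 3)
        + V k * (r 1 * V 1 + r 2 * V 2 + r 3 * V 3)" for k
    by (simp add: algebra_simps)
  have h: "A j*A k + U j*U k + V j*V k = (if j = k then s else 0)" if "j \<in> {1..3}" "k \<in> {1..3}" for j k
    using H that unfolding Hc_def by blast
  have "r 1 * s = 0" using e[of 1] h[of 1 1] h[of 1 2] h[of 1 3] 1 2 3 by simp
  moreover have "r 2 * s = 0" using e[of 2] h[of 2 1] h[of 2 2] h[of 2 3] 1 2 3 by simp
  moreover have "r 3 * s = 0" using e[of 3] h[of 3 1] h[of 3 2] h[of 3 3] 1 2 3 by simp
  ultimately show ?thesis using s by simp
qed

lemma span_core: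
  fixes al mu nu :: real
  assumes G: "Gc A U V s" and s: "s \<noteq> 0"
  defines "r \<equiv> \<lambda>j. (A j * al + U j * mu + V j * nu) / s"
  shows "r 1 * A 1 + r 2 * A 2 + r 3 * A 3 = al"
    and "r 1 * U 1 + r 2 * U 2 + r 3 * U 3 = mu"
    and "r 1 * V 1 + r 2 * V 2 + r 3 * V 3 = nu"
proof -
  have "r 1 * A 1 + r 2 * A 2 + r 3 * A 3 = (al * (A 1*A 1 + A 2*A 2 + A 3*A 3) + mu * (A 1*U 1 + A 2*U 2 + A 3*U 3)
     + nu * (A 1*V 1 + A 2*V 2 + A 3*V 3)) / s" using s unfolding r_def by (simp add: field_simps)
  then show "r 1 * A 1 + r 2 * A 2 + r 3 * A 3 = al" using G s unfolding Gc_def by simp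
  have "r 1 * U 1 + r 2 * U 2 + r 3 * U 3 = (al * (A 1*U 1 + A 2*U 2 + A 3*U 3) + mu * (U 1*U 1 + U 2*U 2 + U 3*U 3)
     + nu * (U 1*V 1 + U 2*V 2 + U 3*V 3)) / s" using s unfolding r_def by (simp add: field_simps)
  then show "r 1 * U 1 + r 2 * U 2 + r 3 * U 3 = mu" using G s unfolding Gc_def by simp
  have "r 1 * V 1 + r 2 * V 2 + r 3 * V 3 = (al * (A 1*V 1 + A 2*V 2 + A 3*V 3) + mu * (U 1*V 1 + U 2*V 2 + U 3*V 3)
     + nu * (V 1*V 1 + V 2*V 2 + V 3*V 3)) / s" using s unfolding r_def by (simp add: field_simps)
  then show "r 1 * V 1 + r 2 * V 2 + r 3 * V 3 = nu" using G s unfolding Gc_def by simp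
qed


lemma sq_expand:
  fixes cb1 cb2 cb3 a1 a2 a3 b1 b2 b3 w :: complex
  shows "(cb1 - 2*a1*w - b1*w^2)^2 + (cb2 - 2*a2*w - b2*w^2)^2 + (cb3 - 2*a3*w - b3*w^2)^2
   = (cb1^2+cb2^2+cb3^2) - 4*(a1*cb1+a2*cb2+a3*cb3)*w + (4*(a1^2+a2^2+a3^2) - 2*(b1*cb1+b2*cb2+b3*cb3))*w^2
     + 4*(a1*b1+a2*b2+a3*b3)*w^3 + (b1^2+b2^2+b3^2)*w^4"
  by algebra

lemma nsq_expand:
  fixes cb1 cb2 cb3 a1 a2 a3 b1 b2 b3 w cw :: complex
  shows "(cb1 - 2*a1*w - b1*w^2)*(b1 - 2*a1*cw - cb1*cw^2) + (cb2 - 2*a2*w - b2*w^2)*(b2 - 2*a2*cw - cb2*cw^2)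
    + (cb3 - 2*a3*w - b3*w^2)*(b3 - 2*a3*cw - cb3*cw^2)
   = (b1*cb1+b2*cb2+b3*cb3)*(1 + (w*cw)^2) + 4*(a1^2+a2^2+a3^2)*(w*cw) - 2*(a1*cb1+a2*cb2+a3*cb3)*(cw - w*cw^2)
     - (cb1^2+cb2^2+cb3^2)*cw^2 - 2*(a1*b1+a2*b2+a3*b3)*(w - w^2*cw) - (b1^2+b2^2+b3^2)*w^2"
  by algebra

lemma dr_expand:
  fixes cb1 cb2 cb3 a1 a2 a3 b1 b2 b3 w :: complex
  shows "(a1 + b1*w)*(cb1 - 2*a1*w - b1*w^2) + (a2 + b2*w)*(cb2 - 2*a2*w - b2*w^2) + (a3 + b3*w)*(cb3 - 2*a3*w - b3*w^2)
   = (a1*cb1+a2*cb2+a3*cb3) + ((b1*cb1+b2*cb2+b3*cb3) - 2*(a1^2+a2^2+a3^2))*w - 3*(a1*b1+a2*b2+a3*b3)*w^2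
     - (b1^2+b2^2+b3^2)*w^3"
  by algebra

lemma Gc_complex:
  assumes G: "Gc A U V s"
  defines "b \<equiv> \<lambda>j. Complex (U j) (V j)" and "cb \<equiv> \<lambda>j. Complex (U j) (- V j)"
    and "a \<equiv> \<lambda>j. complex_of_real (A j)"
  shows "cb 1^2 + cb 2^2 + cb 3^2 = 0" "b 1^2 + b 2^2 + b 3^2 = 0"
    "a 1 * cb 1 + a 2 * cb 2 + a 3 * cb 3 = 0" "a 1 * b 1 + a 2 * b 2 + a 3 * b 3 = 0"
    "b 1 * cb 1 + b 2 * cb 2 + b 3 * cb 3 = 2 * of_real s" "a 1^2 + a 2^2 + a 3^2 = of_real s"
  using G unfolding Gc_def b_def cb_def a_def
  by (simp_all add: complex_eq_iff power2_eq_square algebra_simps)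

lemma D_alt: "D a u v w = Complex u (-v) - 2 * of_real a * w - Complex u v * w^2"
  by (simp add: D_def)

lemma cnj_D: "cnj (D a u v w) = Complex u v - 2 * of_real a * cnj w - Complex u (-v) * (cnj w)^2"
  by (simp add: D_def complex_cnj)

lemma coeffs:
  assumes G: "Gc A U V s"
  shows "(D (A 1) (U 1) (V 1) w)^2 + (D (A 2) (U 2) (V 2) w)^2 + (D (A 3) (U 3) (V 3) w)^2 = 0"
    and "D (A 1) (U 1) (V 1) w * cnj (D (A 1) (U 1) (V 1) w) + D (A 2) (U 2) (V 2) w * cnj (D (A 2) (U 2) (V 2) w)
       + D (A 3) (U 3) (V 3) w * cnj (D (A 3) (U 3) (V 3) w) = 2 * of_real s * (1 + w * cnj w)^2"
    and "(of_real (A 1) + Complex (U 1) (V 1) * w) * D (A 1) (U 1) (V 1) w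
       + (of_real (A 2) + Complex (U 2) (V 2) * w) * D (A 2) (U 2) (V 2) w
       + (of_real (A 3) + Complex (U 3) (V 3) * w) * D (A 3) (U 3) (V 3) w = 0"
proof -
  note C = Gc_complex[OF G]
  show "(D (A 1) (U 1) (V 1) w)^2 + (D (A 2) (U 2) (V 2) w)^2 + (D (A 3) (U 3) (V 3) w)^2 = 0"
    unfolding D_alt sq_expand using C by simp
  show "D (A 1) (U 1) (V 1) w * cnj (D (A 1) (U 1) (V 1) w) + D (A 2) (U 2) (V 2) w * cnj (D (A 2) (U 2) (V 2) w)
       + D (A 3) (U 3) (V 3) w * cnj (D (A 3) (U 3) (V 3) w) = 2 * of_real s * (1 + w * cnj w)^2"
    unfolding cnj_D unfolding D_alt nsq_expand C by (simp add: algebra_simps power2_eq_square)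
  show "(of_real (A 1) + Complex (U 1) (V 1) * w) * D (A 1) (U 1) (V 1) w
       + (of_real (A 2) + Complex (U 2) (V 2) * w) * D (A 2) (U 2) (V 2) w
       + (of_real (A 3) + Complex (U 3) (V 3) * w) * D (A 3) (U 3) (V 3) w = 0"
    unfolding D_alt dr_expand using C by simp
qed


lemma px_lin: "px (\<lambda>z. k * Re z + m * Im z) = (\<lambda>_. k)"
proof
  fix z
  have "((\<lambda>t. k * (Re z + t) + m * Im z) has_real_derivative k) (at 0)"
    by (auto intro!: derivative_eq_intros)
  then show "px (\<lambda>z. k * Re z + m * Im z) z = k"
    unfolding px_def by (simp add: DERIV_imp_deriv)
qed

lemma py_lin: "py (\<lambda>z. k * Re z + m * Im z) = (\<lambda>_. m)"
proof
  fix z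
  have "((\<lambda>t. k * Re z + m * (Im z + t)) has_real_derivative m) (at 0)"
    by (auto intro!: derivative_eq_intros)
  then show "py (\<lambda>z. k * Re z + m * Im z) z = m"
    unfolding py_def by (simp add: DERIV_imp_deriv)
qed

lemma px_const: "px (\<lambda>_. k) = (\<lambda>_. 0)"
  unfolding px_def by (simp add: DERIV_imp_deriv)

lemma py_const: "py (\<lambda>_. k) = (\<lambda>_. 0)"
  unfolding py_def by (simp add: DERIV_imp_deriv)

definition quad :: "real \<Rightarrow> real \<Rightarrow> real \<Rightarrow> complex \<Rightarrow> real" where
  "quad p q r z = p * (Re z)^2 + q * (Re z * Im z) + r * (Im z)^2"

lemma px_quad: "px (quad p q r) = (\<lambda>z. (2*p) * Re z + q * Im z)"
proof
  fix z
  have "((\<lambda>t. p * (Re z + t)^2 + q * ((Re z + t) * Im z) + r * (Im z)^2) has_real_derivative (2*p) * Re z + q * Im z) (at 0)"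
    by (auto intro!: derivative_eq_intros)
  then show "px (quad p q r) z = (2*p) * Re z + q * Im z"
    unfolding px_def quad_def by (simp add: DERIV_imp_deriv)
qed

lemma py_quad: "py (quad p q r) = (\<lambda>z. q * Re z + (2*r) * Im z)"
proof
  fix z
  have "((\<lambda>t. p * (Re z)^2 + q * (Re z * (Im z + t)) + r * (Im z + t)^2) has_real_derivative q * Re z + (2*r) * Im z) (at 0)"
    by (auto intro!: derivative_eq_intros)
  then show "py (quad p q r) z = q * Re z + (2*r) * Im z"
    unfolding py_def quad_def by (simp add: DERIV_imp_deriv)
qed

lemma gen_lin: "gen L (\<lambda>z. k * Re z + m * Im z) z = Re (drift L z) * k + Im (drift L z) * m"
  unfolding gen_def pxx_def pyy_def pxy_def px_lin py_lin px_const py_const by simp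

lemma LB_lin: "LB (\<lambda>z. k * Re z + m * Im z) z = 0"
  unfolding LB_def pxx_def pyy_def px_lin py_lin px_const py_const by simp

lemma gen_quad: "gen L (quad p q r) z = Re (drift L z) * ((2*p) * Re z + q * Im z) + Im (drift L z) * (q * Re z + (2*r) * Im z)
   + (1/2) * (\<Sum>j\<in>{1..3}. (Re (diffc L j z))^2 * (2*p) + 2 * Re (diffc L j z) * Im (diffc L j z) * q
          + (Im (diffc L j z))^2 * (2*r))"
  unfolding gen_def pxx_def pyy_def pxy_def px_quad py_quad px_lin py_lin by simp

lemma LB_quad: "LB (quad p q r) z = (1/4) * (1 + (Re z)^2 + (Im z)^2)^2 * (2*p + 2*r)"
  unfolding LB_def pxx_def pyy_def px_quad py_quad px_lin py_lin by simp


lemma drift_rep: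
  assumes L1: "L 1 = mk (T 1) (A 1) (U 1) (V 1)" and L2: "L 2 = mk (T 2) (A 2) (U 2) (V 2)"
    and L3: "L 3 = mk (T 3) (A 3) (U 3) (V 3)"
  shows "drift L w = - ((2 * of_real (T 1) + of_real (A 1) + Complex (U 1) (V 1) * w) * D (A 1) (U 1) (V 1) w
     + (2 * of_real (T 2) + of_real (A 2) + Complex (U 2) (V 2) * w) * D (A 2) (U 2) (V 2) w
     + (2 * of_real (T 3) + of_real (A 3) + Complex (U 3) (V 3) * w) * D (A 3) (U 3) (V 3) w)"
  unfolding drift_def sum3 L1 L2 L3 T1_mk T2_mk by (simp add: algebra_simps)

lemma basis_lemma:
  assumes rep: "\<And>j. j \<in> {1..3} \<Longrightarrow> L j = mk 0 (A j) (U j) (V j)" and H: "Hc A U V s" and s: "s \<noteq> 0"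
  shows "is_real_basis3 L \<and> trace_orth L (2 * s)"
proof -
  have L1: "L 1 = mk 0 (A 1) (U 1) (V 1)" and L2: "L 2 = mk 0 (A 2) (U 2) (V 2)"
    and L3: "L 3 = mk 0 (A 3) (U 3) (V 3)" using rep by auto
  have G: "Gc A U V s" using Hc_Gc[OF H] .
  have sumL: "(\<Sum>j\<in>{1..3}. r j *\<^sub>R L j) = r 1 *\<^sub>R mk 0 (A 1) (U 1) (V 1) + r 2 *\<^sub>R mk 0 (A 2) (U 2) (V 2)
      + r 3 *\<^sub>R mk 0 (A 3) (U 3) (V 3)" for r
    unfolding sum3 L1 L2 L3 ..
  have tl: "\<forall>j\<in>{1..3}. L j \<in> traceless_sa" using rep by (simp add: traceless_sa_def trace_mk1)
  have ind: "\<forall>r :: nat \<Rightarrow> real. (\<Sum>j\<in>{1..3}. r j *\<^sub>R L j) = 0 \<longrightarrow> (\<forall>j\<in>{1..3}. r j = 0)"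
  proof (intro allI impI)
    fix r :: "nat \<Rightarrow> real" assume z: "(\<Sum>j\<in>{1..3}. r j *\<^sub>R L j) = 0"
    have e00: "(\<Sum>j\<in>{1..3}. r j *\<^sub>R L j)$0$0 = 0" and e01: "(\<Sum>j\<in>{1..3}. r j *\<^sub>R L j)$0$1 = 0"
      using z by simp_all
    have 1: "r 1 * A 1 + r 2 * A 2 + r 3 * A 3 = 0" using e00 unfolding sumL by (simp add: complex_eq_iff)
    have 2: "r 1 * U 1 + r 2 * U 2 + r 3 * U 3 = 0" using e01 unfolding sumL by (simp add: complex_eq_iff)
    have 3: "r 1 * V 1 + r 2 * V 2 + r 3 * V 3 = 0" using e01 unfolding sumL by (simp add: complex_eq_iff)
    from indep_core[OF H s 1 2 3] show "\<forall>j\<in>{1..3}. r j = 0" unfolding set3 by simp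
  qed
  have sp: "\<forall>X\<in>traceless_sa. \<exists>r :: nat \<Rightarrow> real. X = (\<Sum>j\<in>{1..3}. r j *\<^sub>R L j)"
  proof
    fix X assume "X \<in> traceless_sa"
    then have sa: "selfadj X" and tr: "trace X = 0" by (auto simp: traceless_sa_def)
    define al mu nu where "al = Re(X$0$0 - X$1$1)/2" and "mu = Re (X$0$1)" and "nu = Im (X$0$1)"
    have "X$0$0 + X$1$1 = 0" using tr unfolding trace_def sum2 .
    then have t0: "Re(X$0$0 + X$1$1)/2 = 0" by simp
    have X: "X = mk 0 al mu nu" using selfadj_mk[OF sa] unfolding t0 al_def mu_def nu_def .
    define r where "r = (\<lambda>j. (A j * al + U j * mu + V j * nu) / s)"
    have sc1: "r 1 * A 1 + r 2 * A 2 + r 3 * A 3 = al" unfolding r_def by (rule span_core(1)[OF G s])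
    have sc2: "r 1 * U 1 + r 2 * U 2 + r 3 * U 3 = mu" unfolding r_def by (rule span_core(2)[OF G s])
    have sc3: "r 1 * V 1 + r 2 * V 2 + r 3 * V 3 = nu" unfolding r_def by (rule span_core(3)[OF G s])
    have "X = (\<Sum>j\<in>{1..3}. r j *\<^sub>R L j)"
      unfolding sumL X vec_eq_iff all2 using sc1 sc2 sc3 by (simp add: complex_eq_iff add.assoc)
    then show "\<exists>r :: nat \<Rightarrow> real. X = (\<Sum>j\<in>{1..3}. r j *\<^sub>R L j)" by blast
  qed
  have "trace_orth L (2 * s)"
    unfolding trace_orth_def
  proof (intro ballI)
    fix j k :: nat assume j: "j \<in> {1..3}" and k: "k \<in> {1..3}"
    have h: "A j*A k + U j*U k + V j*V k = (if j = k then s else 0)"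
      using H j k unfolding Hc_def by blast
    have "trace (L j ** L k) = of_real (2 * (A j*A k + U j*U k + V j*V k))"
      unfolding rep[OF j] rep[OF k] trace_mk by (simp add: algebra_simps)
    then show "trace (L j ** L k) = of_real (2 * s) * (if j = k then 1 else 0)"
      unfolding h by simp
  qed
  with tl ind sp show ?thesis unfolding is_real_basis3_def by blast
qed


lemma D_0: "D a u v 0 = Complex u (-v)" by (simp add: D_def)
lemma D_1: "D a u v 1 = Complex (-2*a) (-2 * v)" by (simp add: D_def complex_eq_iff)
lemma D_i: "D a u v \<i> = Complex (2*u) (-2*a)" by (simp add: D_def complex_eq_iff power2_eq_square)
lemma Complex_sq: "(Complex x y)^2 = Complex (x*x - y*y) (2*x*y)" by (simp add: complex_eq_iff power2_eq_square)

lemma sq3: "x*x + y*y + z*z = (0::real) \<Longrightarrow> x = 0 \<and> y = 0 \<and> z = 0"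
proof -
  assume h: "x*x + y*y + z*z = 0"
  have "x*x \<ge> 0" "y*y \<ge> 0" "z*z \<ge> 0" by simp_all
  then have "x*x = 0" "y*y = 0" "z*z = 0" using h by linarith+
  then show ?thesis by simp
qed

lemma fwd:
  assumes sa: "\<forall>j\<in>{1..3}. selfadj (L j)" and c: "c \<noteq> 0" and E: "\<forall>f z. gen L f z = c * LB f z"
  shows "is_real_basis3 L \<and> (\<exists>a. trace_orth L a)"
proof -
  define T where "T = (\<lambda>j. Re(L j$0$0 + L j$1$1)/2)"
  define A where "A = (\<lambda>j. Re(L j$0$0 - L j$1$1)/2)"
  define U where "U = (\<lambda>j. Re(L j$0$1))"
  define V where "V = (\<lambda>j. Im(L j$0$1))"
  have rep: "L j = mk (T j) (A j) (U j) (V j)" if "j \<in> {1..3}" for j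
    unfolding T_def A_def U_def V_def using selfadj_mk sa that by blast
  have L1: "L 1 = mk (T 1) (A 1) (U 1) (V 1)" and L2: "L 2 = mk (T 2) (A 2) (U 2) (V 2)"
    and L3: "L 3 = mk (T 3) (A 3) (U 3) (V 3)" using rep by auto
  have dc1: "diffc L 1 z = D (A 1) (U 1) (V 1) z" and dc2: "diffc L 2 z = D (A 2) (U 2) (V 2) z"
    and dc3: "diffc L 3 z = D (A 3) (U 3) (V 3) z" for z
    using diffc_mk[of L 1, OF L1] diffc_mk[of L 2, OF L2] diffc_mk[of L 3, OF L3] by auto
  have dr0: "drift L z = 0" for z
  proof -
    have "Re (drift L z) = 0"
      using E[rule_format, of "\<lambda>z. 1 * Re z + 0 * Im z" z] unfolding gen_lin LB_lin by simp
    moreover have "Im (drift L z) = 0"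
      using E[rule_format, of "\<lambda>z. 0 * Re z + 1 * Im z" z] unfolding gen_lin LB_lin by simp
    ultimately show ?thesis by (simp add: complex_eq_iff)
  qed
  let ?D1 = "\<lambda>z. D (A 1) (U 1) (V 1) z" let ?D2 = "\<lambda>z. D (A 2) (U 2) (V 2) z"
  let ?D3 = "\<lambda>z. D (A 3) (U 3) (V 3) z"
  have e1: "(Re (?D1 z))^2 + (Re (?D2 z))^2 + (Re (?D3 z))^2 - ((Im (?D1 z))^2 + (Im (?D2 z))^2 + (Im (?D3 z))^2) = 0" for z
    using E[rule_format, of "quad 1 0 (-1)" z] unfolding gen_quad LB_quad dr0 sum3 dc1 dc2 dc3
    by (simp add: algebra_simps)
  have e2: "Re (?D1 z) * Im (?D1 z) + Re (?D2 z) * Im (?D2 z) + Re (?D3 z) * Im (?D3 z) = 0" for z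
    using E[rule_format, of "quad 0 1 0" z] unfolding gen_quad LB_quad dr0 sum3 dc1 dc2 dc3
    by (simp add: algebra_simps)
  have e3: "(Re (?D1 0))^2 + (Re (?D2 0))^2 + (Re (?D3 0))^2 = c / 2"
    using E[rule_format, of "quad 1 0 0" 0] unfolding gen_quad LB_quad dr0 sum3 dc1 dc2 dc3
    by (simp add: algebra_simps)
  have sq0: "(?D1 z)^2 + (?D2 z)^2 + (?D3 z)^2 = 0" for z
    using e1[of z] e2[of z] by (simp add: complex_eq_iff power2_eq_square algebra_simps)
  have z0: "(Complex (U 1) (- V 1))^2 + (Complex (U 2) (- V 2))^2 + (Complex (U 3) (- V 3))^2 = 0"
    using sq0[of 0] unfolding D_0 .
  have z1: "(Complex (-2 * A 1) (-2 * V 1))^2 + (Complex (-2 * A 2) (-2 * V 2))^2 + (Complex (-2 * A 3) (-2 * V 3))^2 = 0"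
    using sq0[of 1] unfolding D_1 .
  have zi: "(Complex (2 * U 1) (-2 * A 1))^2 + (Complex (2 * U 2) (-2 * A 2))^2 + (Complex (2 * U 3) (-2 * A 3))^2 = 0"
    using sq0[of "\<i>"] unfolding D_i .
  define s where "s = A 1*A 1 + A 2*A 2 + A 3*A 3"
  have G: "Gc A U V s"
    using z0 z1 zi unfolding Gc_def s_def Complex_sq by (simp add: complex_eq_iff algebra_simps)
  have s: "s \<noteq> 0"
  proof
    assume s0: "s = 0"
    then have "A 1 = 0 \<and> A 2 = 0 \<and> A 3 = 0" "U 1 = 0 \<and> U 2 = 0 \<and> U 3 = 0" "V 1 = 0 \<and> V 2 = 0 \<and> V 3 = 0"
      using G unfolding Gc_def by (auto dest!: sq3)
    then have "c / 2 = 0" using e3 unfolding D_0 by simp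
    with c show False by simp
  qed
  have H: "Hc A U V s" using Gc_Hc[OF G] .
  note DR = drift_rep[OF L1 L2 L3]
  have w0: "Re (drift L 0) = 0" "Im (drift L 0) = 0" using dr0 by simp_all
  then have t1: "T 1 * U 1 + T 2 * U 2 + T 3 * U 3 = 0" and t2: "T 1 * V 1 + T 2 * V 2 + T 3 * V 3 = 0"
    using G unfolding DR D_0 Gc_def by (simp_all add: algebra_simps)
  have w1: "Re (drift L 1) = 0" using dr0 by simp
  then have t3: "T 1 * A 1 + T 2 * A 2 + T 3 * A 3 = 0"
    using G unfolding DR D_1 Gc_def s_def by (simp add: algebra_simps)
  have T0: "T 1 = 0 \<and> T 2 = 0 \<and> T 3 = 0"
    using indep_core[OF H s, of T] t1 t2 t3 by (simp add: mult.commute)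
  have rep0: "L j = mk 0 (A j) (U j) (V j)" if "j \<in> {1..3}" for j
  proof -
    have "j = 1 \<or> j = 2 \<or> j = 3" using that by auto
    then have "T j = 0" using T0 by auto
    then show ?thesis using rep[OF that] by simp
  qed
  from basis_lemma[OF rep0 H s] show ?thesis by blast
qed


lemma mk0: "mk 0 0 0 0 = 0"
  unfolding vec_eq_iff all2 by (simp add: complex_eq_iff)

lemma bwd:
  assumes B: "is_real_basis3 L" and O: "trace_orth L a"
  shows "a \<noteq> 0 \<and> (\<forall>f z. gen L f z = a * LB f z)"
proof -
  have tl: "\<forall>j\<in>{1..3}. L j \<in> traceless_sa"
    and ind: "\<forall>r :: nat \<Rightarrow> real. (\<Sum>j\<in>{1..3}. r j *\<^sub>R L j) = 0 \<longrightarrow> (\<forall>j\<in>{1..3}. r j = 0)"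
    using B unfolding is_real_basis3_def by blast+
  define T where "T = (\<lambda>j. Re(L j$0$0 + L j$1$1)/2)"
  define A where "A = (\<lambda>j. Re(L j$0$0 - L j$1$1)/2)"
  define U where "U = (\<lambda>j. Re(L j$0$1))"
  define V where "V = (\<lambda>j. Im(L j$0$1))"
  have rep: "L j = mk 0 (A j) (U j) (V j)" if j: "j \<in> {1..3}" for j
  proof -
    have sa: "selfadj (L j)" and tr: "trace (L j) = 0" using tl j by (auto simp: traceless_sa_def)
    have r: "L j = mk (T j) (A j) (U j) (V j)"
      unfolding T_def A_def U_def V_def using selfadj_mk[OF sa] .
    have "complex_of_real (2 * T j) = 0" using tr unfolding r trace_mk1 .
    then have "T j = 0" by simp
    with r show ?thesis by simp
  qed
  define s where "s = a / 2"
  have H: "Hc A U V s"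
    unfolding Hc_def
  proof (intro ballI)
    fix j k :: nat assume j: "j \<in> {1..3}" and k: "k \<in> {1..3}"
    have "trace (L j ** L k) = of_real a * (if j = k then 1 else 0)"
      using O j k unfolding trace_orth_def by blast
    then have "complex_of_real (2 * (A j*A k + U j*U k + V j*V k)) = of_real a * (if j = k then 1 else 0)"
      unfolding rep[OF j] rep[OF k] trace_mk by (simp add: algebra_simps)
    also have "of_real a * (if j = k then 1 else 0) = complex_of_real (a * (if j = k then 1 else 0))" by simp
    finally have "2 * (A j*A k + U j*U k + V j*V k) = a * (if j = k then 1 else 0)"
      by (simp only: of_real_eq_iff)
    then show "A j*A k + U j*U k + V j*V k = (if j = k then s else 0)"
      unfolding s_def by (cases "j = k") simp_all
  qed
  have s: "s \<noteq> 0"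
  proof
    assume s0: "s = 0"
    then have "A 1*A 1 + U 1*U 1 + V 1*V 1 = 0" using H unfolding Hc_iff by simp
    then have "A 1 = 0 \<and> U 1 = 0 \<and> V 1 = 0" by (rule sq3)
    then have L1: "L 1 = 0" using rep[of 1] mk0 by simp
    define r :: "nat \<Rightarrow> real" where "r = (\<lambda>j. if j = 1 then 1 else 0)"
    have "(\<Sum>j\<in>{1..3}. r j *\<^sub>R L j) = 0" unfolding sum3 r_def L1 by simp
    then have "r 1 = 0" using ind by auto
    then show False unfolding r_def by simp
  qed
  have a: "a \<noteq> 0" using s unfolding s_def by simp
  have G: "Gc A U V s" using Hc_Gc[OF H] .
  have L1: "L 1 = mk 0 (A 1) (U 1) (V 1)" and L2: "L 2 = mk 0 (A 2) (U 2) (V 2)"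
    and L3: "L 3 = mk 0 (A 3) (U 3) (V 3)" using rep by auto
  have dc1: "diffc L 1 z = D (A 1) (U 1) (V 1) z" and dc2: "diffc L 2 z = D (A 2) (U 2) (V 2) z"
    and dc3: "diffc L 3 z = D (A 3) (U 3) (V 3) z" for z
    using diffc_mk[of L 1, OF L1] diffc_mk[of L 2, OF L2] diffc_mk[of L 3, OF L3] by auto
  have dr0: "drift L z = 0" for z
  proof -
    have "drift L z = - ((of_real (A 1) + Complex (U 1) (V 1) * z) * D (A 1) (U 1) (V 1) z
       + (of_real (A 2) + Complex (U 2) (V 2) * z) * D (A 2) (U 2) (V 2) z
       + (of_real (A 3) + Complex (U 3) (V 3) * z) * D (A 3) (U 3) (V 3) z)"
      using drift_rep[of L "\<lambda>_. 0" A U V z] L1 L2 L3 by simp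
    also have "\<dots> = 0" unfolding coeffs(3)[OF G, of z] by simp
    finally show ?thesis .
  qed
  have "gen L f z = a * LB f z" for f z
  proof -
    let ?D1 = "D (A 1) (U 1) (V 1) z" let ?D2 = "D (A 2) (U 2) (V 2) z" let ?D3 = "D (A 3) (U 3) (V 3) z"
    define Q where "Q = 1 + (Re z)^2 + (Im z)^2"
    have c1: "?D1^2 + ?D2^2 + ?D3^2 = 0" by (rule coeffs(1)[OF G])
    have c2: "?D1 * cnj ?D1 + ?D2 * cnj ?D2 + ?D3 * cnj ?D3 = 2 * of_real s * (1 + z * cnj z)^2"
      by (rule coeffs(2)[OF G])
    have zz: "(1 + z * cnj z)^2 = complex_of_real (Q^2)"
      unfolding Q_def complex_mult_cnj by (simp add: add.assoc)
    have r1: "Re ?D1 * Re ?D1 + Re ?D2 * Re ?D2 + Re ?D3 * Re ?D3 - (Im ?D1 * Im ?D1 + Im ?D2 * Im ?D2 + Im ?D3 * Im ?D3) = 0"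
      using arg_cong[OF c1, of Re] by (simp add: power2_eq_square)
    have r2: "Re ?D1 * Im ?D1 + Re ?D2 * Im ?D2 + Re ?D3 * Im ?D3 = 0"
      using arg_cong[OF c1, of Im] by (simp add: power2_eq_square algebra_simps)
    have r3: "Re ?D1 * Re ?D1 + Re ?D2 * Re ?D2 + Re ?D3 * Re ?D3 + (Im ?D1 * Im ?D1 + Im ?D2 * Im ?D2 + Im ?D3 * Im ?D3) = 2 * s * Q^2"
      using arg_cong[OF c2, of Re] unfolding zz by (simp add: complex_mult_cnj power2_eq_square)
    have R: "Re ?D1 * Re ?D1 + Re ?D2 * Re ?D2 + Re ?D3 * Re ?D3 = s * Q^2" using r1 r3 by linarith
    have I: "Im ?D1 * Im ?D1 + Im ?D2 * Im ?D2 + Im ?D3 * Im ?D3 = s * Q^2" using r1 r3 by linarith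
    have "gen L f z = (1/2) * ((Re ?D1 * Re ?D1 + Re ?D2 * Re ?D2 + Re ?D3 * Re ?D3) * pxx f z
        + 2 * (Re ?D1 * Im ?D1 + Re ?D2 * Im ?D2 + Re ?D3 * Im ?D3) * pxy f z
        + (Im ?D1 * Im ?D1 + Im ?D2 * Im ?D2 + Im ?D3 * Im ?D3) * pyy f z)"
      unfolding gen_def sum3 dc1 dc2 dc3 dr0 by (simp add: algebra_simps power2_eq_square)
    also have "\<dots> = (1/2) * (s * Q^2 * pxx f z + s * Q^2 * pyy f z)" unfolding R I r2 by simp
    also have "\<dots> = a * LB f z" unfolding LB_def s_def Q_def by (simp add: algebra_simps)
    finally show ?thesis .
  qed
  with a show ?thesis by blast
qed

lemma pauli_ok: "is_real_basis3 pauli \<and> trace_orth pauli 2"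
proof -
  define A :: "nat \<Rightarrow> real" where "A = (\<lambda>j. if j = 3 then 1 else 0)"
  define U :: "nat \<Rightarrow> real" where "U = (\<lambda>j. if j = 1 then 1 else 0)"
  define V :: "nat \<Rightarrow> real" where "V = (\<lambda>j. if j = 2 then -1 else 0)"
  have rep: "pauli j = mk 0 (A j) (U j) (V j)" if "j \<in> {1..3}" for j
  proof -
    have "j = 1 \<or> j = 2 \<or> j = 3" using that by auto
    then show ?thesis
      unfolding vec_eq_iff all2 A_def U_def V_def pauli_def
      by (auto simp: complex_eq_iff)
  qed
  have H: "Hc A U V 1" unfolding Hc_iff A_def U_def V_def by simp
  from basis_lemma[OF rep H] show ?thesis by simp
qed

theorem proposition3p3:
  fixes L :: "nat \<Rightarrow> complex^2^2"
  assumes "\<forall>j\<in>{1..3}. selfadj (L j)"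
  shows "((\<exists>c::real. c \<noteq> 0 \<and> (\<forall>f z. gen L f z = c * LB f z))
            \<longleftrightarrow> (is_real_basis3 L \<and> (\<exists>a. trace_orth L a)))
         \<and> (is_real_basis3 pauli \<and> trace_orth pauli 2)
         \<and> (is_real_basis3 L \<and> trace_orth L 1 \<longrightarrow> (\<forall>f z. gen L f z = LB f z))"
proof (intro conjI impI)
  show "(\<exists>c::real. c \<noteq> 0 \<and> (\<forall>f z. gen L f z = c * LB f z))
            \<longleftrightarrow> (is_real_basis3 L \<and> (\<exists>a. trace_orth L a))"
  proof
    assume "\<exists>c::real. c \<noteq> 0 \<and> (\<forall>f z. gen L f z = c * LB f z)"
    then obtain c where "c \<noteq> 0" "\<forall>f z. gen L f z = c * LB f z" by blast
    from fwd[OF assms this] show "is_real_basis3 L \<and> (\<exists>a. trace_orth L a)" .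
  next
    assume "is_real_basis3 L \<and> (\<exists>a. trace_orth L a)"
    then obtain a where "is_real_basis3 L" "trace_orth L a" by blast
    from bwd[OF this] show "\<exists>c::real. c \<noteq> 0 \<and> (\<forall>f z. gen L f z = c * LB f z)" by blast
  qed
  show "is_real_basis3 pauli" "trace_orth pauli 2" using pauli_ok by auto
next
  assume "is_real_basis3 L \<and> trace_orth L 1"
  then have "1 \<noteq> (0::real) \<and> (\<forall>f z. gen L f z = 1 * LB f z)" using bwd by blast
  then show "\<forall>f z. gen L f z = LB f z" by simp
qed

end
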